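(* Let $\phi(x,z)$ be an associate of the additive formal group $F(x,y)=x+y$ with $\phi(x,z)\ne x$. Then $f(\phi(x,z),x)\ne0$ for every nonzero $f(x_1,x)\in\mathbb{C}((x_1,x))$.
   Context: An associate of $F(x,y)=x+y$ is $\phi(x,z)\in\mathbb{C}((x))[[z]]$ with $\phi(x,0)=x$ and $\phi(\phi(x,x_2),x_0)=\phi(x,x_0+x_2)$. $\mathbb{C}((x_1,x))=\mathbb{C}[[x_1,x]][x_1^{-1},x^{-1}]$. For $f(x_1,x)=\sum_{m,n\ge k}a(m,n)x_1^mx^n$, $f(\phi(x,z),x):=\sum_{m,n}a(m,n)\phi(x,z)^mx^n\in\mathbb{C}((x))[[z]]$, where $\phi(x,z)^m$ for $m<0$ is the inverse power in $\mathbb{C}((x))[[z]]$ (writing $\phi(x,z)=x+zA$, $\phi^m=\sum_{i\ge0}\binom mi x^{m-i}z^iA^i$). *)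

theory Defs
  imports "HOL-Analysis.Analysis" "HOL-Computational_Algebra.Formal_Laurent_Series"
begin

text \<open>C((x))[[z]] is rendered as the type complex fls fps: a formal power series
  in z whose coefficients are formal Laurent series in x.\<close>

type_synonym lzser = "complex fls fps"

definition phi_pow :: "lzser \<Rightarrow> int \<Rightarrow> lzser" where
  "phi_pow \<phi> m = (if 0 \<le> m then \<phi> ^ nat m else inverse \<phi> ^ nat (- m))"

text \<open>For g in C((x)), g(phi(x,z)) = sum_m g_m phi(x,z)^m in C((x))[[z]];
  subst1 g phi j e is the coefficient of z^j x^e (a finite sum in the relevant cases).\<close>
definition subst1 :: "complex fls \<Rightarrow> lzser \<Rightarrow> nat \<Rightarrow> int \<Rightarrow> complex" where
  "subst1 g \<phi> j e = (\<Sum>\<^sub>\<infinity> m. fls_nth g m * fls_nth (fps_nth (phi_pow \<phi> m) j) e)"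

text \<open>Associate of the additive formal group F(x,y) = x + y:
  phi(x,0) = x and phi(phi(x,x2),x0) = phi(x,x0+x2), compared coefficientwise
  at x0^j x2^i x^e.\<close>
definition is_additive_associate :: "lzser \<Rightarrow> bool" where
  "is_additive_associate \<phi> \<longleftrightarrow>
     fps_nth \<phi> 0 = fls_X \<and>
     (\<forall>j i e. subst1 (fps_nth \<phi> j) \<phi> i e
              = of_nat ((i + j) choose j) * fls_nth (fps_nth \<phi> (i + j)) e)"

text \<open>Elements of C((x1,x)) = C[[x1,x]][x1^-1,x^-1]: coefficient functions
  a(m,n) with support in {m >= k, n >= k} for some k.\<close>
definition in_C_x1x :: "(int \<Rightarrow> int \<Rightarrow> complex) \<Rightarrow> bool" where
  "in_C_x1x a \<longleftrightarrow> (\<exists>k. \<forall>m n. a m n \<noteq> 0 \<longrightarrow> k \<le> m \<and> k \<le> n)"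

text \<open>f(phi(x,z),x) = sum_{m,n} a(m,n) phi(x,z)^m x^n; subst2 a phi j e is its
  coefficient of z^j x^e.\<close>
definition subst2 :: "(int \<Rightarrow> int \<Rightarrow> complex) \<Rightarrow> lzser \<Rightarrow> nat \<Rightarrow> int \<Rightarrow> complex" where
  "subst2 a \<phi> j e =
     (\<Sum>\<^sub>\<infinity> (m, n). a m n * fls_nth (fps_nth (phi_pow \<phi> m * fps_const (fls_X_intpow n)) j) e)"

end

theory Submission imports Defs begin
no_notation vec_nth (infixl \<open>$\<close> 90)
unbundle fps_syntax

definition Dx :: "lzser \<Rightarrow> lzser" where "Dx F = Abs_fps (\<lambda>j. fls_deriv (F$j))"

lemma Dx_nth[simp]: "Dx F $ j = fls_deriv (F$j)" by (simp add: Dx_def)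

lemma Dx_mult: "Dx (F*G) = Dx F * G + F * Dx G"
proof (rule fps_ext)
  fix n
  have "Dx (F*G) $ n = (\<Sum>i=0..n. fls_deriv (F$i) * G$(n-i)) + (\<Sum>i=0..n. F$i * fls_deriv (G$(n-i)))"
    by (simp add: fps_mult_nth fls_deriv_sum sum.distrib[symmetric] add.commute)
  also have "\<dots> = (Dx F * G + F * Dx G) $ n" by (simp only: fps_add_nth fps_mult_nth Dx_nth)
  finally show "Dx (F*G) $ n = (Dx F * G + F * Dx G) $ n" .
qed

lemma Dx_one[simp]: "Dx 1 = 0"
  by (rule fps_ext) (simp add: fps_one_nth)

definition K :: "complex fls \<Rightarrow> lzser \<Rightarrow> lzser" where
  "K p F = fps_deriv F - fps_const p * Dx F"

lemma K_mult: "K p (F*G) = K p F * G + F * K p G"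
  by (simp add: K_def Dx_mult algebra_simps)

lemma K_one[simp]: "K p 1 = 0" by (simp add: K_def)

lemma K_nth: "K p F $ j = of_nat (j+1) * F $ (j+1) - p * fls_deriv (F $ j)"
  by (simp add: K_def)

lemma K_power: "K p f = 0 \<Longrightarrow> K p (f^n) = 0"
  by (induction n) (simp_all add: K_mult)

lemma K0_power: "K p f $ 0 = 0 \<Longrightarrow> K p (f^n) $ 0 = 0"
  by (induction n) (simp_all add: K_mult)

lemma K_inverse: assumes "K p f = 0" "f $ 0 \<noteq> 0" shows "K p (inverse f) = 0"
proof -
  have "0 = K p (f * inverse f)" using inverse_mult_eq_1'[OF assms(2)] by simp
  also have "\<dots> = f * K p (inverse f)" using assms(1) by (simp add: K_mult)
  finally have "f * K p (inverse f) = 0" by simp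
  moreover have "f \<noteq> 0" using assms(2) by auto
  ultimately show ?thesis by simp
qed

lemma K0_inverse: assumes "K p f $ 0 = 0" "f $ 0 \<noteq> 0" shows "K p (inverse f) $ 0 = 0"
proof -
  have "0 = K p (f * inverse f) $ 0" using inverse_mult_eq_1'[OF assms(2)] by simp
  also have "\<dots> = f $ 0 * K p (inverse f) $ 0" using assms(1) by (simp add: K_mult)
  finally show ?thesis using assms(2) by simp
qed

lemma K_phi_pow: "K p f = 0 \<Longrightarrow> f $ 0 \<noteq> 0 \<Longrightarrow> K p (phi_pow f m) = 0"
  by (simp add: phi_pow_def K_power K_inverse)

lemma K0_phi_pow: "K p f $ 0 = 0 \<Longrightarrow> f $ 0 \<noteq> 0 \<Longrightarrow> K p (phi_pow f m) $ 0 = 0"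
  by (simp add: phi_pow_def K0_power K0_inverse)

lemma fls_X_eq: "(fls_X :: complex fls) = fls_X_intpow 1"
  by (simp add: fls_X_conv_shift_1)

lemma phi_pow_0: "f $ 0 = fls_X \<Longrightarrow> phi_pow f m $ 0 = fls_X_intpow m"
proof -
  assume h: "f $ 0 = fls_X"
  show ?thesis
  proof (cases "0 \<le> m")
    case True thus ?thesis using h fls_X_intpow_power[of 1 "nat m"]
      by (simp add: phi_pow_def fps_nth_power_0 fls_X_eq)
  next
    case False
    have "inverse (fls_X :: complex fls) = fls_X_intpow (-1)" by (simp only: fls_X_eq fls_inverse_X_intpow)
    then show ?thesis using False h fls_X_intpow_power[of "-1" "nat (-m)"]
      by (simp add: phi_pow_def fps_nth_power_0)
  qed
qed

lemma infsum_fin_supp: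
  fixes f :: "'a \<Rightarrow> complex"
  assumes "finite S" "\<And>x. x \<notin> S \<Longrightarrow> f x = 0"
  shows "infsum f UNIV = sum f S"
proof -
  have "infsum f UNIV = infsum f S" by (rule infsum_cong_neutral) (use assms in auto)
  thus ?thesis using assms(1) by simp
qed

lemma fls_times_nth_bounds:
  fixes f h :: "complex fls"
  assumes "\<And>i. i < a \<Longrightarrow> f $$ i = 0" "\<And>i. i < b \<Longrightarrow> h $$ i = 0"
  shows "(f*h) $$ n = (\<Sum>i=a..n-b. f $$ i * h $$ (n-i))"
proof (cases "f = 0 \<or> h = 0")
  case True thus ?thesis by auto
next
  case False
  hence fa: "a \<le> fls_subdegree f" and hb: "b \<le> fls_subdegree h"
    using assms by (auto intro!: fls_subdegree_geI)
  have "(f*h) $$ n = (\<Sum>i=fls_subdegree f..n - fls_subdegree h. f $$ i * h $$ (n - i))"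
    by (rule fls_times_nth(2))
  also have "\<dots> = (\<Sum>i=a..n-b. f $$ i * h $$ (n-i))"
  proof (rule sum.mono_neutral_left)
    show "\<forall>i\<in>{a..n - b} - {fls_subdegree f..n - fls_subdegree h}. f $$ i * h $$ (n - i) = 0"
    proof
      fix i assume i: "i \<in> {a..n - b} - {fls_subdegree f..n - fls_subdegree h}"
      show "f $$ i * h $$ (n - i) = 0"
      proof (cases "i < fls_subdegree f")
        case True thus ?thesis by simp
      next
        case False
        hence "n - i < fls_subdegree h" using i by auto
        thus ?thesis by simp
      qed
    qed
  qed (use fa hb in auto)
  finally show ?thesis .
qed

lemma key_identity:
  fixes g p :: "complex fls"
  shows "infsum (\<lambda>m. g $$ m * (of_int m * p $$ (e - m + 1))) UNIV = (p * fls_deriv g) $$ e"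
proof -
  define dg where "dg = fls_subdegree g"
  define dp where "dp = fls_subdegree p"
  have "infsum (\<lambda>m. g $$ m * (of_int m * p $$ (e - m + 1))) UNIV
      = (\<Sum>m\<in>{dg..e+1-dp}. g $$ m * (of_int m * p $$ (e - m + 1)))"
  proof (rule infsum_fin_supp)
    fix m assume "m \<notin> {dg..e+1-dp}"
    hence "m < dg \<or> e - m + 1 < dp" by auto
    thus "g $$ m * (of_int m * p $$ (e - m + 1)) = 0" unfolding dg_def dp_def by auto
  qed simp
  also have "\<dots> = (\<Sum>i\<in>{dp..e-(dg-1)}. p $$ i * fls_deriv g $$ (e - i))"
    by (rule sum.reindex_bij_witness[of _ "\<lambda>i. e + 1 - i" "\<lambda>m. e + 1 - m"])
       (auto simp: algebra_simps)
  also have "\<dots> = (p * fls_deriv g) $$ e"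
    by (rule fls_times_nth_bounds[symmetric]) (auto simp: dp_def dg_def)
  finally show ?thesis .
qed

lemma phi1_nth:
  assumes h0: "\<phi> $ 0 = fls_X"
  shows "phi_pow \<phi> m $ 1 $$ e = of_int m * (\<phi> $ 1) $$ (e - m + 1)"
proof -
  define p where "p = \<phi> $ 1"
  have "K p \<phi> $ 0 = 0" using h0 by (simp add: K_nth p_def)
  hence "K p (phi_pow \<phi> m) $ 0 = 0" by (rule K0_phi_pow) (simp add: h0)
  hence "phi_pow \<phi> m $ 1 = p * fls_deriv (fls_X_intpow m)"
    using phi_pow_0[OF h0, of m] by (simp add: K_nth)
  also have "\<dots> = of_int m * (p * fls_X_intpow (m-1))"
    by (simp add: fls_deriv_X_intpow mult.left_commute)
  finally have "phi_pow \<phi> m $ 1 $$ e = of_int m * (p * fls_X_intpow (m-1)) $$ e" by simp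
  also have "\<dots> = of_int m * p $$ (e - m + 1)"
    by (simp only: fls_mult_of_int_nth fls_X_intpow_times_conv_shift fls_shift_nth) (simp add: algebra_simps)
  finally show ?thesis by (simp add: p_def)
qed

lemma K_phi_zero:
  assumes A: "is_additive_associate \<phi>"
  shows "K (\<phi> $ 1) \<phi> = 0"
proof (rule fps_ext)
  fix j
  define p where "p = \<phi> $ 1"
  have h0: "\<phi> $ 0 = fls_X" using A by (simp add: is_additive_associate_def)
  show "K (\<phi> $ 1) \<phi> $ j = 0 $ j"
  proof -
    have "K (\<phi> $ 1) \<phi> $ j $$ e = 0" for e
    proof -
    have "subst1 (\<phi> $ j) \<phi> 1 e = of_nat ((1 + j) choose j) * \<phi> $ (1 + j) $$ e"
      using A by (simp add: is_additive_associate_def)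
    moreover have "subst1 (\<phi> $ j) \<phi> 1 e = (p * fls_deriv (\<phi> $ j)) $$ e"
      unfolding subst1_def phi1_nth[OF h0] p_def by (rule key_identity)
    ultimately have "of_nat (j+1) * \<phi> $ (j+1) $$ e = (p * fls_deriv (\<phi> $ j)) $$ e"
      by (simp add: add.commute)
    moreover have "K (\<phi> $ 1) \<phi> $ j $$ e = of_nat (j+1) * \<phi> $ (j+1) $$ e - (p * fls_deriv (\<phi> $ j)) $$ e"
      by (simp only: K_nth fls_minus_nth fls_mult_of_nat_nth p_def)
    ultimately show "K (\<phi> $ 1) \<phi> $ j $$ e = 0" by simp
  qed
  thus ?thesis by (auto intro: fls_eqI)
  qed
qed

lemma Q_rec:
  assumes A: "is_additive_associate \<phi>"
  shows "of_nat (j+1) * phi_pow \<phi> m $ (j+1) = \<phi> $ 1 * fls_deriv (phi_pow \<phi> m $ j)"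
proof -
  have h0: "\<phi> $ 0 = fls_X" using A by (simp add: is_additive_associate_def)
  have "K (\<phi> $ 1) (phi_pow \<phi> m) = 0"
    by (rule K_phi_pow[OF K_phi_zero[OF A]]) (simp add: h0)
  hence "K (\<phi> $ 1) (phi_pow \<phi> m) $ j = 0" by simp
  thus ?thesis by (simp add: K_nth)
qed

lemma p_nonzero:
  assumes A: "is_additive_associate \<phi>" and ne: "\<phi> \<noteq> fps_const fls_X"
  shows "\<phi> $ 1 \<noteq> 0"
proof
  assume p0: "\<phi> $ 1 = 0"
  have h0: "\<phi> $ 0 = fls_X" using A by (simp add: is_additive_associate_def)
  have "\<phi> $ j = fps_const fls_X $ j" for j
  proof (cases j)
    case 0 thus ?thesis using h0 by simp
  next
    case (Suc i)
    have "of_nat (i+1) * phi_pow \<phi> 1 $ (i+1) = \<phi> $ 1 * fls_deriv (phi_pow \<phi> 1 $ i)"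
      by (rule Q_rec[OF A])
    hence "of_nat (i+1) * \<phi> $ (i+1) = 0" using p0 by (simp add: phi_pow_def)
    hence "\<phi> $ (i+1) = 0" by (metis of_nat_eq_0_iff add_eq_0_iff_both_eq_0 mult_eq_0_iff one_neq_zero)
    thus ?thesis using Suc by simp
  qed
  hence "\<phi> = fps_const fls_X" by (rule fps_ext)
  thus False using ne by simp
qed

definition Pp :: "int \<Rightarrow> nat \<Rightarrow> int \<Rightarrow> complex" where
  "Pp r j m = (\<Prod>i<j. of_int m + of_nat i * (of_int r - 1))"

lemma Q_lead:
  assumes A: "is_additive_associate \<phi>" and pnz: "\<phi> $ 1 \<noteq> 0"
  defines "r \<equiv> fls_subdegree (\<phi> $ 1)"
  defines "c \<equiv> (\<phi> $ 1) $$ r"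
  shows "(\<forall>n < m + int j * (r - 1). phi_pow \<phi> m $ j $$ n = 0) \<and>
         phi_pow \<phi> m $ j $$ (m + int j * (r - 1)) = c ^ j * Pp r j m / fact j"
proof (induction j)
  case 0
  have h0: "\<phi> $ 0 = fls_X" using A by (simp add: is_additive_associate_def)
  show ?case using phi_pow_0[OF h0, of m] by (simp add: Pp_def)
next
  case (Suc j)
  define s where "s = m + int j * (r - 1)"
  define Q where "Q = phi_pow \<phi> m $ j"
  define p where "p = \<phi> $ 1"
  have IH1: "\<And>n. n < s \<Longrightarrow> Q $$ n = 0" and IH2: "Q $$ s = c ^ j * Pp r j m / fact j"
    using Suc.IH by (auto simp: s_def Q_def)
  have rec: "phi_pow \<phi> m $ (j+1) $$ n = (p * fls_deriv Q) $$ n / of_nat (j+1)" for n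
  proof -
    have "of_nat (j+1) * phi_pow \<phi> m $ (j+1) = p * fls_deriv Q" unfolding p_def Q_def by (rule Q_rec[OF A])
    hence "of_nat (j+1) * phi_pow \<phi> m $ (j+1) $$ n = (p * fls_deriv Q) $$ n"
      by (metis fls_mult_of_nat_nth(1))
    moreover have "(of_nat (j+1) :: complex) \<noteq> 0" by (simp only: of_nat_eq_0_iff)
    ultimately show ?thesis by (metis nonzero_mult_div_cancel_left)
  qed
  have pr: "\<And>i. i < r \<Longrightarrow> p $$ i = 0" by (simp add: r_def p_def)
  have dq: "\<And>i. i < s - 1 \<Longrightarrow> fls_deriv Q $$ i = 0" using IH1 by simp
  have prod: "(p * fls_deriv Q) $$ n = (\<Sum>i=r..n-(s-1). p $$ i * fls_deriv Q $$ (n-i))" for n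
    by (rule fls_times_nth_bounds[OF pr dq])
  have s': "m + int (Suc j) * (r - 1) = s + r - 1" by (simp add: s_def algebra_simps)
  show ?case unfolding s'
  proof
    show "\<forall>n<s + r - 1. phi_pow \<phi> m $ Suc j $$ n = 0"
      using rec prod by simp
    have "(p * fls_deriv Q) $$ (s + r - 1) = p $$ r * fls_deriv Q $$ (s - 1)"
      using prod[of "s+r-1"] by simp
    also have "\<dots> = c * (of_int s * Q $$ s)" by (simp add: c_def p_def)
    finally have "phi_pow \<phi> m $ Suc j $$ (s + r - 1) = c * (of_int s * (c ^ j * Pp r j m / fact j)) / of_nat (j+1)"
      using rec IH2 by simp
    also have "\<dots> = c ^ Suc j * Pp r (Suc j) m / fact (Suc j)"
      by (simp add: Pp_def s_def field_simps)
    finally show "phi_pow \<phi> m $ Suc j $$ (s + r - 1) = c ^ Suc j * Pp r (Suc j) m / fact (Suc j)" .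
  qed
qed

lemma Pp_Suc: "Pp r (Suc j) m = Pp r j m * (of_int m + of_nat j * (of_int r - 1))"
  by (simp add: Pp_def)

lemma Pp_vanish_aux:
  fixes b :: "int \<Rightarrow> complex"
  assumes "finite T" "\<And>j. (\<Sum>m\<in>I. b m * Pp r j m) = 0"
  shows "(\<Sum>m\<in>I. b m * (\<Prod>t\<in>T. of_int m - t) * Pp r j m) = 0"
  using assms(1)
proof (induction T arbitrary: j rule: finite_induct)
  case empty thus ?case using assms(2) by simp
next
  case (insert t T)
  define S where "S j = (\<Sum>m\<in>I. b m * (\<Prod>t\<in>T. of_int m - t) * Pp r j m)" for j
  have "(\<Sum>m\<in>I. b m * (\<Prod>t\<in>insert t T. of_int m - t) * Pp r j m)
      = (\<Sum>m\<in>I. b m * (\<Prod>t\<in>T. of_int m - t) * (Pp r (Suc j) m - (of_nat j * (of_int r - 1) + t) * Pp r j m))"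
    using insert.hyps by (intro sum.cong) (auto simp: Pp_Suc algebra_simps)
  also have "\<dots> = S (Suc j) - (of_nat j * (of_int r - 1) + t) * S j"
    by (simp add: S_def algebra_simps sum_subtractf sum_distrib_left sum.distrib)
  also have "\<dots> = 0" using insert.IH by (simp add: S_def)
  finally show ?case .
qed

lemma Pp_vanish:
  fixes b :: "int \<Rightarrow> complex"
  assumes "finite I" "\<And>j. (\<Sum>m\<in>I. b m * Pp r j m) = 0" "m0 \<in> I"
  shows "b m0 = 0"
proof -
  define T :: "complex set" where "T = of_int ` (I - {m0})"
  have "0 = (\<Sum>m\<in>I. b m * (\<Prod>t\<in>T. of_int m - t) * Pp r 0 m)"
    using Pp_vanish_aux[where T=T and I=I and b=b and r=r and j=0] assms(1,2) by (simp add: T_def)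
  also have "\<dots> = b m0 * (\<Prod>t\<in>T. of_int m0 - t)"
  proof -
    have "(\<Sum>m\<in>I. b m * (\<Prod>t\<in>T. of_int m - t) * Pp r 0 m) = (\<Sum>m\<in>{m0}. b m * (\<Prod>t\<in>T. of_int m - t) * Pp r 0 m)"
    proof (rule sum.mono_neutral_right)
      show "\<forall>i\<in>I - {m0}. b i * (\<Prod>t\<in>T. of_int i - t) * Pp r 0 i = 0"
      proof
        fix i assume i: "i \<in> I - {m0}"
        have "(\<Prod>t\<in>T. of_int i - t) = 0"
          using assms(1) i by (auto simp: T_def prod_zero_iff)
        thus "b i * (\<Prod>t\<in>T. of_int i - t) * Pp r 0 i = 0" by simp
      qed
    qed (use assms in auto)
    thus ?thesis by (simp add: Pp_def)
  qed
  finally have "b m0 * (\<Prod>t\<in>T. of_int m0 - t) = 0" by simp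
  moreover have "(\<Prod>t\<in>T. of_int m0 - t) \<noteq> 0"
    using assms(1) by (auto simp: T_def prod_zero_iff)
  ultimately show ?thesis by simp
qed

lemma subst2_term:
  "fls_nth (fps_nth (phi_pow \<phi> m * fps_const (fls_X_intpow n)) j) e = phi_pow \<phi> m $ j $$ (e - n)"
  by (simp only: fps_mult_right_const_nth fls_X_intpow_times_conv_shift fls_shift_nth) simp

theorem lemma2p7:
  fixes \<phi> :: "complex fls fps" and a :: "int \<Rightarrow> int \<Rightarrow> complex"
  assumes "is_additive_associate \<phi>"
    and "\<phi> \<noteq> fps_const fls_X"
    and "in_C_x1x a"
    and "a \<noteq> (\<lambda>m n. 0)"
  shows "\<exists>j e. subst2 a \<phi> j e \<noteq> 0"
proof (rule ccontr)
  assume allz: "\<not> (\<exists>j e. subst2 a \<phi> j e \<noteq> 0)"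
  note A = assms(1)
  have pnz: "\<phi> $ 1 \<noteq> 0" by (rule p_nonzero[OF A assms(2)])
  define r where "r = fls_subdegree (\<phi> $ 1)"
  define c where "c = (\<phi> $ 1) $$ r"
  have cnz: "c \<noteq> 0" using pnz by (simp add: c_def r_def)
  obtain k where k: "\<And>m n. a m n \<noteq> 0 \<Longrightarrow> k \<le> m \<and> k \<le> n"
    using assms(3) by (auto simp: in_C_x1x_def)
  obtain m1 n1 where a1: "a m1 n1 \<noteq> 0" using assms(4) by (auto simp: fun_eq_iff)
  define P where "P t = (\<exists>m n. a m n \<noteq> 0 \<and> t = nat (m + n - 2*k))" for t
  have "P (nat (m1 + n1 - 2*k))" using a1 by (auto simp: P_def)
  hence "P (Least P)" by (rule LeastI)
  then obtain m0 n0 where a0: "a m0 n0 \<noteq> 0" and l0: "Least P = nat (m0 + n0 - 2*k)"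
    by (auto simp: P_def)
  define d where "d = m0 + n0"
  have dmin: "d \<le> m + n" if "a m n \<noteq> 0" for m n
  proof -
    have "P (nat (m + n - 2*k))" using that by (auto simp: P_def)
    hence "Least P \<le> nat (m + n - 2*k)" by (rule Least_le)
    thus ?thesis using l0 k[OF that] k[OF a0] unfolding d_def by linarith
  qed
  define I where "I = {k..d-k}"
  have m0I: "m0 \<in> I" using k[OF a0] by (auto simp: I_def d_def)
  have eqs: "(\<Sum>m\<in>I. a m (d-m) * Pp r j m) = 0" for j
  proof -
    define e where "e = d + int j * (r - 1)"
    define f where "f = (\<lambda>(m,n). a m n * fls_nth (fps_nth (phi_pow \<phi> m * fps_const (fls_X_intpow n)) j) e)"
    have "subst2 a \<phi> j e = infsum f UNIV" by (simp add: subst2_def f_def)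
    also have "\<dots> = sum f ((\<lambda>m. (m, d-m)) ` I)"
    proof (rule infsum_fin_supp)
      show "finite ((\<lambda>m. (m, d-m)) ` I)" by (simp add: I_def)
    next
      fix x assume x: "x \<notin> (\<lambda>m. (m, d-m)) ` I"
      obtain m n where xe: "x = (m,n)" by (cases x)
      show "f x = 0"
      proof (cases "a m n = 0")
        case True thus ?thesis by (simp add: f_def xe)
      next
        case False
        have "d \<le> m + n" using dmin[OF False] .
        moreover have "m + n \<noteq> d"
        proof
          assume "m + n = d"
          hence "x = (\<lambda>m. (m, d-m)) m" "m \<in> I" using k[OF False] by (auto simp: xe I_def)
          thus False using x by blast
        qed
        ultimately have "e - n < m + int j * (r - 1)" by (simp add: e_def)
        hence "phi_pow \<phi> m $ j $$ (e - n) = 0"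
          using Q_lead[OF A pnz, of m j] by (simp add: r_def)
        thus ?thesis by (simp only: f_def xe prod.case subst2_term) simp
      qed
    qed
    also have "\<dots> = (\<Sum>m\<in>I. f (m, d-m))"
      by (subst sum.reindex) (auto simp: inj_on_def)
    also have "\<dots> = (\<Sum>m\<in>I. a m (d-m) * (c ^ j * Pp r j m / fact j))"
    proof (rule sum.cong)
      fix m assume "m \<in> I"
      have eq: "e - (d - m) = m + int j * (r - 1)" by (simp add: e_def)
      have "phi_pow \<phi> m $ j $$ (e - (d - m)) = c ^ j * Pp r j m / fact j"
        unfolding eq using Q_lead[OF A pnz, of m j] unfolding r_def[symmetric] c_def[symmetric] by blast
      thus "f (m, d-m) = a m (d-m) * (c ^ j * Pp r j m / fact j)"
        unfolding f_def prod.case subst2_term by simp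
    qed simp
    also have "\<dots> = (c ^ j / fact j) * (\<Sum>m\<in>I. a m (d-m) * Pp r j m)"
      by (simp add: sum_distrib_left algebra_simps)
    finally have "(c ^ j / fact j) * (\<Sum>m\<in>I. a m (d-m) * Pp r j m) = 0" using allz by auto
    moreover have "c ^ j / fact j \<noteq> 0" using cnz by simp
    ultimately show ?thesis using mult_eq_0_iff by metis
  qed
  have "a m0 (d - m0) = 0"
    by (rule Pp_vanish[where b="\<lambda>m. a m (d-m)" and r=r, OF _ eqs m0I]) (simp add: I_def)
  thus False using a0 by (simp add: d_def)
qed

end
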